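(* Let $\mathcal{G}$ be the complete quadrilateral with points $a,b,c,x,y,z$ and lines $\{a,b,c\}$, $\{a,y,z\}$, $\{b,x,z\}$, $\{c,x,y\}$; let $R$ be a commutative ring with $2=0$, $A=M_R(\mathcal{G},1)$, $\ell=a+b+c$ and $s=a+b+c+x+y+z$. Then $A=A^\ell_0\oplus A^\ell_1$, where $A^\ell_0$ and $A^\ell_1$ are the eigenspaces of $\operatorname{ad}_\ell$ for the eigenvalues $0$ and $1$, and \[ A^\ell_0=\langle a,b,c,x+y+z\rangle=\langle a,b,c,s\rangle,\qquad A^\ell_1=\langle \ell x,\ell y\rangle . \]
   Context: For distinct collinear points $p,q$ (written $p\sim q$), $p\wedge q$ is the third point of their line. The nilpotent Matsuo algebra $A=M_R(\mathcal{G},1)$ is the free $R$-module with basis the points and commutative bilinear product $p\cdot q=0$ if $p=q$ or $p\not\sim q$, $p\cdot q=p+q+p\wedge q$ if $p\sim q$. $\operatorname{ad}_\ell(v)=\ell v$; the eigenspace for $\lambda$ is $\{v:\ell v=\lambda v\}$. Angle brackets denote $R$-linear span. *)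

theory Defs
  imports Main
begin

text \<open>A point-line geometry is given by its set of lines (each a 3-element set of points).
 Elements of the free R-module with basis the points are functions 'p \<Rightarrow> 'r (the point
 set is a finite type).\<close>

definition collin :: "'p set set \<Rightarrow> 'p \<Rightarrow> 'p \<Rightarrow> bool" where
  "collin L p q \<longleftrightarrow> p \<noteq> q \<and> (\<exists>l\<in>L. p \<in> l \<and> q \<in> l)"

definition wedge :: "'p set set \<Rightarrow> 'p \<Rightarrow> 'p \<Rightarrow> 'p" where
  "wedge L p q = (THE r. \<exists>l\<in>L. p \<in> l \<and> q \<in> l \<and> r \<in> l \<and> r \<noteq> p \<and> r \<noteq> q)"

definition bvec :: "'p \<Rightarrow> 'p \<Rightarrow> 'r::comm_ring_1" where
  "bvec p = (\<lambda>r. if r = p then 1 else 0)"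

definition vadd :: "('p \<Rightarrow> 'r::comm_ring_1) \<Rightarrow> ('p \<Rightarrow> 'r) \<Rightarrow> 'p \<Rightarrow> 'r" where
  "vadd u v = (\<lambda>r. u r + v r)"

definition vscale :: "'r::comm_ring_1 \<Rightarrow> ('p \<Rightarrow> 'r) \<Rightarrow> 'p \<Rightarrow> 'r" where
  "vscale t v = (\<lambda>r. t * v r)"

definition vzero :: "'p \<Rightarrow> 'r::comm_ring_1" where
  "vzero = (\<lambda>r. 0)"

definition basis_prod :: "'p set set \<Rightarrow> 'p \<Rightarrow> 'p \<Rightarrow> 'p \<Rightarrow> 'r::comm_ring_1" where
  "basis_prod L p q = (if collin L p q
      then vadd (vadd (bvec p) (bvec q)) (bvec (wedge L p q)) else vzero)"

definition mprod :: "'p set set \<Rightarrow> ('p::finite \<Rightarrow> 'r::comm_ring_1) \<Rightarrow> ('p \<Rightarrow> 'r) \<Rightarrow> 'p \<Rightarrow> 'r" where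
  "mprod L u v = (\<lambda>r. \<Sum>p\<in>UNIV. \<Sum>q\<in>UNIV. u p * v q * basis_prod L p q r)"

definition eigensp :: "'p set set \<Rightarrow> ('p::finite \<Rightarrow> 'r::comm_ring_1) \<Rightarrow> 'r \<Rightarrow> ('p \<Rightarrow> 'r) set" where
  "eigensp L l lam = {v. mprod L l v = vscale lam v}"

definition rspan :: "('p \<Rightarrow> 'r::comm_ring_1) set \<Rightarrow> ('p \<Rightarrow> 'r) set" where
  "rspan S = {v. \<exists>c. v = (\<lambda>r. \<Sum>s\<in>S. c s * s r)}"

definition is_direct_sum :: "('p \<Rightarrow> 'r::comm_ring_1) set \<Rightarrow> ('p \<Rightarrow> 'r) set \<Rightarrow> bool" where
  "is_direct_sum U W \<longleftrightarrow> (\<forall>v. \<exists>u w. u \<in> U \<and> w \<in> W \<and> v = vadd u w) \<and> U \<inter> W = {vzero}"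

datatype pt = Pa | Pb | Pc | Px | Py | Pz

instance pt :: finite
proof
  have "(UNIV :: pt set) = {Pa, Pb, Pc, Px, Py, Pz}" by (auto intro: pt.exhaust)
  then show "finite (UNIV :: pt set)" by (metis finite.emptyI finite_insert)
qed

definition quad_lines :: "pt set set" where
  "quad_lines = {{Pa, Pb, Pc}, {Pa, Py, Pz}, {Pb, Px, Pz}, {Pc, Px, Py}}"

end

theory Submission
  imports Defs
begin

lemma UNIV_pt: "(UNIV::pt set) = {Pa,Pb,Pc,Px,Py,Pz}" by (auto intro: pt.exhaust)

lemma wedge_eq: assumes "\<exists>l\<in>quad_lines. p \<in> l \<and> q \<in> l \<and> r \<in> l \<and> r \<noteq> p \<and> r \<noteq> q"
  and "\<And>r'. (\<exists>l\<in>quad_lines. p \<in> l \<and> q \<in> l \<and> r' \<in> l \<and> r' \<noteq> p \<and> r' \<noteq> q) \<Longrightarrow> r' = r"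
  shows "wedge quad_lines p q = r"
  unfolding wedge_def using assms by (rule the_equality)
lemma wedges: "wedge quad_lines Pa Pb = Pc" "wedge quad_lines Pb Pa = Pc"
    "wedge quad_lines Pa Pc = Pb" "wedge quad_lines Pc Pa = Pb"
    "wedge quad_lines Pb Pc = Pa" "wedge quad_lines Pc Pb = Pa"
    "wedge quad_lines Pa Py = Pz" "wedge quad_lines Pa Pz = Py"
    "wedge quad_lines Pb Px = Pz" "wedge quad_lines Pb Pz = Px"
    "wedge quad_lines Pc Px = Py" "wedge quad_lines Pc Py = Px"
    by (rule wedge_eq; simp add: quad_lines_def; blast?)+

lemma collin_tab: "collin quad_lines p q \<longleftrightarrow> p \<noteq> q \<and> (p,q) \<notin> {(Pa,Px),(Px,Pa),(Pb,Py),(Py,Pb),(Pc,Pz),(Pz,Pc)}"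
  by (cases p; cases q; simp add: collin_def quad_lines_def)

definition fq :: "pt \<Rightarrow> pt \<Rightarrow> 'r::comm_ring_1" where
  "fq q r = basis_prod quad_lines Pa q r + basis_prod quad_lines Pb q r + basis_prod quad_lines Pc q r"

lemma fq_tab:
  assumes char2: "(2::'r::comm_ring_1) = 0"
  shows "(fq q r :: 'r) = (case q of Px \<Rightarrow> (if r \<in> {Pb,Pc,Py,Pz} then 1 else 0)
     | Py \<Rightarrow> (if r \<in> {Pa,Pc,Px,Pz} then 1 else 0)
     | Pz \<Rightarrow> (if r \<in> {Pa,Pb,Px,Py} then 1 else 0) | _ \<Rightarrow> 0)"
proof -
  have tt: "(1::'r) + 1 = 0" using char2 by simp
  show ?thesis
  by (cases q; cases r; simp add: fq_def basis_prod_def collin_tab wedges vadd_def bvec_def vzero_def char2)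
qed

lemma mprod_l:
  fixes v :: "pt \<Rightarrow> 'r::comm_ring_1"
  assumes char2: "(2::'r) = 0"
  shows "mprod quad_lines (vadd (vadd (bvec Pa) (bvec Pb)) (bvec Pc)) v =
   (\<lambda>r. case r of Pa \<Rightarrow> v Py + v Pz | Pb \<Rightarrow> v Px + v Pz | Pc \<Rightarrow> v Px + v Py
      | Px \<Rightarrow> v Py + v Pz | Py \<Rightarrow> v Px + v Pz | Pz \<Rightarrow> v Px + v Py)"
proof
  fix r
  have "mprod quad_lines (vadd (vadd (bvec Pa) (bvec Pb)) (bvec Pc)) v r
     = (\<Sum>q\<in>UNIV. \<Sum>p\<in>UNIV. vadd (vadd (bvec Pa) (bvec Pb)) (bvec Pc) p * v q * basis_prod quad_lines p q r)"
    unfolding mprod_def by (rule sum.swap)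
  also have "\<dots> = (\<Sum>q\<in>UNIV. v q * fq q r)"
    by (rule sum.cong) (simp_all add: UNIV_pt vadd_def bvec_def fq_def algebra_simps)
  also have "\<dots> = (case r of Pa \<Rightarrow> v Py + v Pz | Pb \<Rightarrow> v Px + v Pz | Pc \<Rightarrow> v Px + v Py
      | Px \<Rightarrow> v Py + v Pz | Py \<Rightarrow> v Px + v Pz | Pz \<Rightarrow> v Px + v Py)"
    by (cases r; simp add: UNIV_pt fq_tab[OF char2] algebra_simps)
  finally show "mprod quad_lines (vadd (vadd (bvec Pa) (bvec Pb)) (bvec Pc)) v r = (case r of Pa \<Rightarrow> v Py + v Pz | Pb \<Rightarrow> v Px + v Pz | Pc \<Rightarrow> v Px + v Py
      | Px \<Rightarrow> v Py + v Pz | Py \<Rightarrow> v Px + v Pz | Pz \<Rightarrow> v Px + v Py)" .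
qed

lemma rspan4:
  assumes "distinct [p1,p2,p3,p4]"
  shows "rspan {p1,p2,p3,p4} = {v. \<exists>k1 k2 k3 k4. v = (\<lambda>r. k1 * p1 r + k2 * p2 r + k3 * p3 r + k4 * p4 r)}"
proof -
  have "(\<exists>c. v = (\<lambda>r. \<Sum>s\<in>{p1,p2,p3,p4}. c s * s r)) \<longleftrightarrow>
      (\<exists>k1 k2 k3 k4. v = (\<lambda>r. k1 * p1 r + k2 * p2 r + k3 * p3 r + k4 * p4 r))" for v
  proof
    assume "\<exists>c. v = (\<lambda>r. \<Sum>s\<in>{p1,p2,p3,p4}. c s * s r)"
    then obtain c where "v = (\<lambda>r. \<Sum>s\<in>{p1,p2,p3,p4}. c s * s r)" by blast
    then show "\<exists>k1 k2 k3 k4. v = (\<lambda>r. k1 * p1 r + k2 * p2 r + k3 * p3 r + k4 * p4 r)"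
      using assms by (auto simp: add.assoc)
  next
    assume "\<exists>k1 k2 k3 k4. v = (\<lambda>r. k1 * p1 r + k2 * p2 r + k3 * p3 r + k4 * p4 r)"
    then obtain k1 k2 k3 k4 where v: "v = (\<lambda>r. k1 * p1 r + k2 * p2 r + k3 * p3 r + k4 * p4 r)" by blast
    show "\<exists>c. v = (\<lambda>r. \<Sum>s\<in>{p1,p2,p3,p4}. c s * s r)"
      by (rule exI[of _ "\<lambda>s. if s = p1 then k1 else if s = p2 then k2 else if s = p3 then k3 else k4"])
        (use assms v in \<open>auto simp: add.assoc\<close>)
  qed
  then show ?thesis unfolding rspan_def by blast
qed

lemma rspan2:
  assumes "p1 \<noteq> p2"
  shows "rspan {p1,p2} = {v. \<exists>k1 k2. v = (\<lambda>r. k1 * p1 r + k2 * p2 r)}"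
proof -
  have "(\<exists>c. v = (\<lambda>r. \<Sum>s\<in>{p1,p2}. c s * s r)) \<longleftrightarrow>
      (\<exists>k1 k2. v = (\<lambda>r. k1 * p1 r + k2 * p2 r))" for v
  proof
    assume "\<exists>c. v = (\<lambda>r. \<Sum>s\<in>{p1,p2}. c s * s r)"
    then obtain c where "v = (\<lambda>r. \<Sum>s\<in>{p1,p2}. c s * s r)" by blast
    then show "\<exists>k1 k2. v = (\<lambda>r. k1 * p1 r + k2 * p2 r)"
      using assms by auto
  next
    assume "\<exists>k1 k2. v = (\<lambda>r. k1 * p1 r + k2 * p2 r)"
    then obtain k1 k2 where v: "v = (\<lambda>r. k1 * p1 r + k2 * p2 r)" by blast
    show "\<exists>c. v = (\<lambda>r. \<Sum>s\<in>{p1,p2}. c s * s r)"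
      by (rule exI[of _ "\<lambda>s. if s = p1 then k1 else k2"]) (use assms v in auto)
  qed
  then show ?thesis unfolding rspan_def by blast
qed


theorem proposition5p12:
  assumes char2: "(2::'r::comm_ring_1) = 0"
  defines "G \<equiv> quad_lines"
    and "a \<equiv> (bvec Pa :: pt \<Rightarrow> 'r)" and "b \<equiv> (bvec Pb :: pt \<Rightarrow> 'r)"
    and "c \<equiv> (bvec Pc :: pt \<Rightarrow> 'r)" and "x \<equiv> (bvec Px :: pt \<Rightarrow> 'r)"
    and "y \<equiv> (bvec Py :: pt \<Rightarrow> 'r)" and "z \<equiv> (bvec Pz :: pt \<Rightarrow> 'r)"
  defines "l \<equiv> vadd (vadd a b) c"
    and "s \<equiv> vadd (vadd (vadd (vadd (vadd a b) c) x) y) z"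
  shows "is_direct_sum (eigensp G l 0) (eigensp G l 1)
    \<and> eigensp G l 0 = rspan {a, b, c, vadd (vadd x y) z}
    \<and> eigensp G l 0 = rspan {a, b, c, s}
    \<and> eigensp G l 1 = rspan {mprod G l x, mprod G l y}"
proof (cases "(1::'r) = 0")
  case True
  have all: "f = g" for f g :: "pt \<Rightarrow> 'r"
  proof
    fix r
    have "f r = f r * 1" "g r = g r * 1" by simp_all
    then show "f r = g r" using True by simp
  qed
  have e: "v \<in> eigensp G l t" for v t unfolding eigensp_def by (simp, rule all)
  have p1: "\<forall>v. \<exists>u w. u \<in> eigensp G l 0 \<and> w \<in> eigensp G l 1 \<and> v = vadd u w"
    by (intro allI exI conjI e all)
  have p2: "eigensp G l 0 \<inter> eigensp G l 1 = {vzero}"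
  proof (rule set_eqI)
    fix v :: "pt \<Rightarrow> 'r"
    show "v \<in> eigensp G l 0 \<inter> eigensp G l 1 \<longleftrightarrow> v \<in> {vzero}"
      by (simp add: e all[of v vzero])
  qed
  have r: "rspan S = eigensp G l t" for S t
  proof (rule set_eqI)
    fix v :: "pt \<Rightarrow> 'r"
    have "v \<in> rspan S" unfolding rspan_def by (simp, rule exI, rule all)
    then show "v \<in> rspan S \<longleftrightarrow> v \<in> eigensp G l t" by (simp add: e)
  qed
  show ?thesis unfolding is_direct_sum_def by (intro conjI p1 p2 r[symmetric])
next
  case False
  have tt: "t + t = 0" for t :: 'r
  proof -
    have "t + t = 2 * t" by (rule mult_2[symmetric])
    also have "\<dots> = 0 * t" by (simp only: char2)
    also have "\<dots> = 0" by (rule mult_zero_left)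
    finally show ?thesis .
  qed
  have tt2: "t + (t + s) = s" for t s :: 'r
  proof -
    have "t + (t + s) = (t + t) + s" by (simp add: add.assoc)
    then show ?thesis using tt[of t] by simp
  qed
  have neg: "- t = t" for t :: 'r
    using tt[of t] unfolding add_eq_0_iff by (rule sym)
  have sumeq: "s + t = 0 \<longleftrightarrow> s = t" for s t :: 'r
    by (auto simp: add_eq_0_iff neg)
  have M: "mprod G l v = (\<lambda>r. case r of Pa \<Rightarrow> v Py + v Pz | Pb \<Rightarrow> v Px + v Pz | Pc \<Rightarrow> v Px + v Py
      | Px \<Rightarrow> v Py + v Pz | Py \<Rightarrow> v Px + v Pz | Pz \<Rightarrow> v Px + v Py)" for v
    unfolding G_def l_def a_def b_def c_def by (rule mprod_l[OF char2])
  have allpt: "(\<forall>r. P r) \<longleftrightarrow> P Pa \<and> P Pb \<and> P Pc \<and> P Px \<and> P Py \<and> P Pz" for P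
  proof
    assume "\<forall>r. P r" then show "P Pa \<and> P Pb \<and> P Pc \<and> P Px \<and> P Py \<and> P Pz" by simp
  next
    assume h: "P Pa \<and> P Pb \<and> P Pc \<and> P Px \<and> P Py \<and> P Pz"
    show "\<forall>r. P r"
    proof
      fix r show "P r" using h by (cases r) simp_all
    qed
  qed
  have E0: "eigensp G l 0 = {v. v Px = v Py \<and> v Py = v Pz}"
  proof -
    have "mprod G l v = vscale 0 v \<longleftrightarrow> v Px = v Py \<and> v Py = v Pz" for v
      unfolding M vscale_def fun_eq_iff allpt by (auto simp: sumeq)
    then show ?thesis unfolding eigensp_def by (rule Collect_cong)
  qed
  have E1: "eigensp G l 1 = {v. v Py + v Pz = v Pa \<and> v Px + v Pz = v Pb \<and> v Px + v Py = v Pc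
      \<and> v Py + v Pz = v Px \<and> v Px + v Pz = v Py \<and> v Px + v Py = v Pz}"
  proof -
    have "mprod G l v = vscale 1 v \<longleftrightarrow> v Py + v Pz = v Pa \<and> v Px + v Pz = v Pb \<and> v Px + v Py = v Pc
      \<and> v Py + v Pz = v Px \<and> v Px + v Pz = v Py \<and> v Px + v Py = v Pz" for v
      unfolding M vscale_def fun_eq_iff allpt by simp
    then show ?thesis unfolding eigensp_def by (rule Collect_cong)
  qed
  have ev: "a Pa = 1" "a Pb = 0" "a Pc = 0" "a Px = 0" "a Py = 0" "a Pz = 0"
     "b Pa = 0" "b Pb = 1" "b Pc = 0" "b Px = 0" "b Py = 0" "b Pz = 0"
     "c Pa = 0" "c Pb = 0" "c Pc = 1" "c Px = 0" "c Py = 0" "c Pz = 0"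
     "x Pa = 0" "x Pb = 0" "x Pc = 0" "x Px = 1" "x Py = 0" "x Pz = 0"
     "y Pa = 0" "y Pb = 0" "y Pc = 0" "y Px = 0" "y Py = 1" "y Pz = 0"
     "z Pa = 0" "z Pb = 0" "z Pc = 0" "z Px = 0" "z Py = 0" "z Pz = 1"
    by (simp_all add: a_def b_def c_def x_def y_def z_def bvec_def)
  have d1: "distinct [a, b, c, vadd (vadd x y) z]"
    using False by (auto simp: fun_eq_iff allpt ev vadd_def)
  have d2: "distinct [a, b, c, s]"
    using False by (auto simp: fun_eq_iff allpt ev vadd_def s_def)
  have lx: "mprod G l x = (\<lambda>r. case r of Pa \<Rightarrow> 0 | Pb \<Rightarrow> 1 | Pc \<Rightarrow> 1 | Px \<Rightarrow> 0 | Py \<Rightarrow> 1 | Pz \<Rightarrow> 1)"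
    unfolding M by (simp add: ev)
  have ly: "mprod G l y = (\<lambda>r. case r of Pa \<Rightarrow> 1 | Pb \<Rightarrow> 0 | Pc \<Rightarrow> 1 | Px \<Rightarrow> 1 | Py \<Rightarrow> 0 | Pz \<Rightarrow> 1)"
    unfolding M by (simp add: ev)
  have d3: "mprod G l x \<noteq> mprod G l y"
  proof
    assume "mprod G l x = mprod G l y"
    then have "mprod G l x Pa = mprod G l y Pa" by simp
    then show False using False by (simp add: lx ly)
  qed
  have S0: "eigensp G l 0 = rspan {a, b, c, vadd (vadd x y) z}"
  proof -
    have "(v Px = v Py \<and> v Py = v Pz) \<longleftrightarrow>
      (\<exists>k1 k2 k3 k4. v = (\<lambda>r. k1 * a r + k2 * b r + k3 * c r + k4 * vadd (vadd x y) z r))" for v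
    proof
      assume h: "v Px = v Py \<and> v Py = v Pz"
      show "\<exists>k1 k2 k3 k4. v = (\<lambda>r. k1 * a r + k2 * b r + k3 * c r + k4 * vadd (vadd x y) z r)"
        by (rule exI[of _ "v Pa"], rule exI[of _ "v Pb"], rule exI[of _ "v Pc"], rule exI[of _ "v Px"])
          (use h in \<open>simp add: fun_eq_iff allpt ev vadd_def\<close>)
    qed (auto simp: ev vadd_def)
    then show ?thesis unfolding E0 rspan4[OF d1] by (rule Collect_cong)
  qed
  have S0': "eigensp G l 0 = rspan {a, b, c, s}"
  proof -
    have "(v Px = v Py \<and> v Py = v Pz) \<longleftrightarrow>
      (\<exists>k1 k2 k3 k4. v = (\<lambda>r. k1 * a r + k2 * b r + k3 * c r + k4 * s r))" for v
    proof
      assume h: "v Px = v Py \<and> v Py = v Pz"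
      show "\<exists>k1 k2 k3 k4. v = (\<lambda>r. k1 * a r + k2 * b r + k3 * c r + k4 * s r)"
        by (rule exI[of _ "v Pa - v Px"], rule exI[of _ "v Pb - v Px"], rule exI[of _ "v Pc - v Px"], rule exI[of _ "v Px"])
          (use h in \<open>simp add: fun_eq_iff allpt ev vadd_def s_def\<close>)
    qed (auto simp: ev vadd_def s_def)
    then show ?thesis unfolding E0 rspan4[OF d2] by (rule Collect_cong)
  qed
  have S1: "eigensp G l 1 = rspan {mprod G l x, mprod G l y}"
  proof -
    have "(v Py + v Pz = v Pa \<and> v Px + v Pz = v Pb \<and> v Px + v Py = v Pc
      \<and> v Py + v Pz = v Px \<and> v Px + v Pz = v Py \<and> v Px + v Py = v Pz) \<longleftrightarrow>
      (\<exists>k1 k2. v = (\<lambda>r. k1 * mprod G l x r + k2 * mprod G l y r))" for v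
    proof
      assume h: "v Py + v Pz = v Pa \<and> v Px + v Pz = v Pb \<and> v Px + v Py = v Pc
      \<and> v Py + v Pz = v Px \<and> v Px + v Pz = v Py \<and> v Px + v Py = v Pz"
      have h1: "v Pc = v Pa + v Pb" "v Px = v Pa" "v Py = v Pb" "v Pz = v Pa + v Pb"
      proof -
        have h1: "v Py + v Pz = v Pa" "v Px + v Pz = v Pb" "v Px + v Py = v Pc"
          "v Py + v Pz = v Px" "v Px + v Pz = v Py" "v Px + v Py = v Pz" using h by blast+
        have ha: "v Pa = v Py + v Pz" using h1(1) by simp
        have hb: "v Pb = v Px + v Pz" using h1(2) by simp
        have e: "v Pa + v Pb = v Px + v Py + (v Pz + v Pz)" unfolding ha hb by (simp add: algebra_simps)
        then have e2: "v Pa + v Pb = v Px + v Py" by (simp add: tt)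
        show "v Px = v Pa" using h1(1) h1(4) by simp
        show "v Py = v Pb" using h1(2) h1(5) by simp
        show "v Pc = v Pa + v Pb" using h1(3) e2 by simp
        show "v Pz = v Pa + v Pb" using h1(6) e2 by simp
      qed
      show "\<exists>k1 k2. v = (\<lambda>r. k1 * mprod G l x r + k2 * mprod G l y r)"
        by (rule exI[of _ "v Pb"], rule exI[of _ "v Pa"])
          (use h1 in \<open>simp add: fun_eq_iff allpt lx ly algebra_simps\<close>)
    next
      assume "\<exists>k1 k2. v = (\<lambda>r. k1 * mprod G l x r + k2 * mprod G l y r)"
      then obtain k1 k2 where "v = (\<lambda>r. k1 * mprod G l x r + k2 * mprod G l y r)" by blast
      then show "v Py + v Pz = v Pa \<and> v Px + v Pz = v Pb \<and> v Px + v Py = v Pc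
      \<and> v Py + v Pz = v Px \<and> v Px + v Pz = v Py \<and> v Px + v Py = v Pz"
        by (simp add: lx ly algebra_simps tt tt2)
    qed
    then show ?thesis unfolding E1 rspan2[OF d3] by (rule Collect_cong)
  qed
  have DS: "is_direct_sum (eigensp G l 0) (eigensp G l 1)"
    unfolding is_direct_sum_def
  proof
    show "\<forall>v. \<exists>u w. u \<in> eigensp G l 0 \<and> w \<in> eigensp G l 1 \<and> v = vadd u w"
    proof
      fix v :: "pt \<Rightarrow> 'r"
      define e1 where "e1 = v Px - v Pz"
      define e2 where "e2 = v Px - v Py"
      define w :: "pt \<Rightarrow> 'r" where "w = (\<lambda>r. case r of Pa \<Rightarrow> e1 + e2 | Pb \<Rightarrow> e1 | Pc \<Rightarrow> e2
         | Px \<Rightarrow> e1 + e2 | Py \<Rightarrow> e1 | Pz \<Rightarrow> e2)"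
      define u where "u = (\<lambda>r. v r - w r)"
      have "w \<in> eigensp G l 1" unfolding E1 w_def by (simp add: algebra_simps tt tt2)
      moreover have "u \<in> eigensp G l 0" unfolding E0 u_def w_def e1_def e2_def by (simp add: algebra_simps)
      moreover have "v = vadd u w" unfolding u_def vadd_def by simp
      ultimately show "\<exists>u w. u \<in> eigensp G l 0 \<and> w \<in> eigensp G l 1 \<and> v = vadd u w" by blast
    qed
  next
    have "vzero \<in> eigensp G l 0" "vzero \<in> eigensp G l 1" unfolding E0 E1 by (simp_all add: vzero_def)
    moreover have "v = vzero" if "v \<in> eigensp G l 0" "v \<in> eigensp G l 1" for v
    proof -
      have "mprod G l v = vscale 0 v" "mprod G l v = vscale 1 v" using that unfolding eigensp_def by auto
      then show ?thesis by (auto simp: vscale_def vzero_def fun_eq_iff)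
    qed
    ultimately show "eigensp G l 0 \<inter> eigensp G l 1 = {vzero}" by blast
  qed
  show ?thesis using DS S0 S0' S1 by blast
qed

end
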